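(* Let $s,t,q,N$ be integers with $0\le s<q$, $1\le t<q$, $N\ge0$, $t\nmid q$ and $\gcd(t,q)=g>1$. Put $\tilde t=t/g$, $\tilde q=q/g$, and write $s=\overline sg+s_g$ ($0\le s_g<g$), $\overline s=\overline{\overline s}\tilde t+\hat{\hat s}$ ($0\le\hat{\hat s}<\tilde t$), $\tilde q=\overline{\overline q}\tilde t+\hat{\hat q}$ ($1\le\hat{\hat q}<\tilde t$). Let $S^-(s,t,q,N)=\sum_{k=0}^N\lfloor(s-kt)/q\rfloor$, $M=-\lfloor(s-Nt)/q\rfloor$, $x_M=(s+(M-1)q)/t$, $S=-\lfloor q/t\rfloor\frac{(M-1)M}2-M(N-\lfloor x_M\rfloor)$, $H=\{k\in\mathbb N:(\hat{\hat s}+k\hat{\hat q})\bmod\tilde t<\hat{\hat q}\}$, $J=H\cap\{0,\dots,\tilde t-1\}=\{j_0<\dots<j_{\hat{\hat q}-1}\}$, $S_K=\sum_{k\in K}k$. Then: (a) if $j_0\ge M$, $S^-(s,t,q,N)=S$; (b.1) if $j_0<M\le j_{\hat{\hat q}-1}$, $S^-(s,t,q,N)=S-S_K$ with $K=H\cap\{0,\dots,M-1\}$; (b.2) if $j_{\hat{\hat q}-1}<M$ and $j_0+\tilde t\ge M$, $S^-(s,t,q,N)=S-S_J$; (b.3) if $j_{\hat{\hat q}-1}<M$ and $j_0+\tilde t<M$, with $u=\lfloor(M-1)/\tilde t\rfloor$ and $K=H\cap\{u\tilde t,\dots,M-1\}$, $S^-(s,t,q,N)=S-uS_J-\hat{\hat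 q}\,\tilde t\frac{(u-1)u}2-S_K$.
   Context: Here $r\bmod\tilde t$ denotes the representative of $r$ in $\{0,\dots,\tilde t-1\}$. *)

theory Defs
  imports Main
begin

text \<open>S^-(s,t,q,N) = sum_{k=0}^N floor((s - k t)/q); for q > 0 the floor of the
  rational quotient equals integer division.\<close>
definition Sminus :: "int \<Rightarrow> int \<Rightarrow> int \<Rightarrow> int \<Rightarrow> int" where
  "Sminus s t q N = (\<Sum>k=0..N. (s - k*t) div q)"

end

theory Submission
  imports Defs
begin


lemma dm_uniq:
  fixes tt k r :: int
  assumes "tt > 0" "0 \<le> r" "r < tt"
  shows "(tt*k + r) div tt = k" "(tt*k + r) mod tt = r"
proof -
  have "(r + k*tt) div tt = r div tt + k" using assms by simp
  then show "(tt*k + r) div tt = k" using assms by (simp add: ac_simps)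
  have "(r + k*tt) mod tt = r mod tt" by simp
  then show "(tt*k + r) mod tt = r" using assms by (simp add: ac_simps)
qed

lemma red_div:
  fixes g tt Y sg :: int
  assumes "g > 0" "tt > 0" "0 \<le> sg" "sg < g"
  shows "(g*Y + sg) div (g*tt) = Y div tt"
proof -
  have "(g*Y + sg) div g = Y" using dm_uniq[of g sg Y] assms by simp
  then show ?thesis using assms zdiv_zmult2_eq[of tt "g*Y+sg" g] by simp
qed

lemma add_div_carry:
  fixes X qt tt :: int
  assumes "tt > 0"
  shows "(X + qt) div tt = X div tt + qt div tt + (if (X+qt) mod tt < qt mod tt then 1 else 0)"
proof -
  define a where "a = X div tt"
  define r where "r = X mod tt"
  define b where "b = qt div tt"
  define c where "c = qt mod tt"
  have X: "X = tt*a + r" and Q: "qt = tt*b + c" unfolding a_def r_def b_def c_def by simp_all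
  have r: "0 \<le> r" "r < tt" "0 \<le> c" "c < tt" using assms unfolding r_def c_def by simp_all
  show ?thesis
  proof (cases "r + c < tt")
    case True
    have e: "X + qt = tt*(a+b) + (r + c)" using X Q by (simp add: algebra_simps)
    have "(X+qt) div tt = a + b" "(X+qt) mod tt = r + c"
      using dm_uniq[of tt "r+c" "a+b"] True r assms unfolding e by simp_all
    then show ?thesis using r unfolding a_def b_def c_def by simp
  next
    case False
    have e: "X + qt = tt*(a+b+1) + (r + c - tt)" using X Q by (simp add: algebra_simps)
    have "(X+qt) div tt = a + b + 1" "(X+qt) mod tt = r + c - tt"
      using dm_uniq[of tt "r+c-tt" "a+b+1"] False r assms unfolding e by simp_all
    then show ?thesis using r False unfolding a_def b_def c_def by simp
  qed
qed



lemma tri_step: "((int n + 1 - 1) * (int n + 1)) div 2 = ((int n - 1) * int n) div 2 + int n"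
proof -
  have "(int n + 1 - 1) * (int n + 1) = (int n - 1) * int n + 2 * int n" by (simp add: algebra_simps)
  then show ?thesis by simp
qed

lemma sum_ident:
  fixes a :: "int \<Rightarrow> int" and c :: int and H :: "int set"
  assumes step: "\<And>m. m \<ge> 1 \<Longrightarrow> a (m+1) = a m + c + (if m \<in> H then 1 else 0)"
  shows "(\<Sum>m\<in>{1..int n}. a m) - int n * a (int n)
         = - c * (((int n - 1) * int n) div 2) - \<Sum>(H \<inter> {0..int n - 1})"
proof (induction n)
  case 0
  then show ?case by simp
next
  case (Suc n)
  have I1: "{1..int (Suc n)} = insert (int n + 1) {1..int n}" by auto
  have L: "(\<Sum>m\<in>{1..int (Suc n)}. a m) = a (int n + 1) + (\<Sum>m\<in>{1..int n}. a m)"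
    unfolding I1 by (subst sum.insert) auto
  have I2: "H \<inter> {0..int (Suc n) - 1} = (if int n \<in> H then insert (int n) (H \<inter> {0..int n - 1}) else H \<inter> {0..int n - 1})"
    by (auto, metis order.order_iff_strict)
  have R: "\<Sum>(H \<inter> {0..int (Suc n) - 1}) = (if int n \<in> H then int n else 0) + \<Sum>(H \<inter> {0..int n - 1})"
    unfolding I2 by (auto simp: sum.insert)
  have D: "int n * (a (int n + 1) - a (int n)) = int n * c + (if int n \<in> H then int n else 0)"
  proof (cases "n = 0")
    case True then show ?thesis by simp
  next
    case False
    then have "a (int n + 1) = a (int n) + c + (if int n \<in> H then 1 else 0)" using step[of "int n"] by simp
    then show ?thesis by (simp add: algebra_simps)
  qed
  have T: "((int (Suc n) - 1) * int (Suc n)) div 2 = ((int n - 1) * int n) div 2 + int n"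
    using tri_step[of n] by (simp add: ac_simps)
  show ?case
    using Suc.IH D unfolding L R T by (simp add: algebra_simps)
qed


lemma le_div_iff_int:
  fixes a b q :: int
  assumes "q > 0"
  shows "a \<le> b div q \<longleftrightarrow> a*q \<le> b"
proof -
  have e: "b = (b div q)*q + b mod q" by simp
  have m: "0 \<le> b mod q" "b mod q < q" using assms by simp_all
  show ?thesis
  proof
    assume h: "a \<le> b div q"
    have "a*q \<le> (b div q) * q" using h assms by simp
    then show "a*q \<le> b" using e m by linarith
  next
    assume h: "a*q \<le> b"
    show "a \<le> b div q"
    proof (rule ccontr)
      assume "\<not> a \<le> b div q"
      then have "b div q + 1 \<le> a" by simp
      then have "(b div q + 1) * q \<le> a*q" using assms by simp
      then show False using h e m by (simp add: distrib_right)
    qed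
  qed
qed

lemma count_ident:
  fixes s t q :: int
  assumes "0 \<le> s" "s < q" "t > 0"
  shows "(\<Sum>k=0..int N. (s - k*t) div q)
       = - (\<Sum>m\<in>{1..-((s - int N*t) div q)}. (int N - (s + (m-1)*q) div t))"
proof (induction N)
  case 0
  have "s div q = 0" using assms by simp
  then show ?case by simp
next
  case (Suc N)
  define n where "n = int N"
  define M where "M = -((s - n*t) div q)"
  define M' where "M' = -((s - (n+1)*t) div q)"
  have q: "q > 0" using assms by simp
  have MM: "M \<le> M'" unfolding M_def M'_def
    using zdiv_mono1[of "s - (n+1)*t" "s - n*t" q] q assms by (simp add: algebra_simps)
  have nonpos: "x div q \<le> 0" if "x < q" for x
    using le_div_iff_int[OF q, of 1 x] that by simp
  have n0: "0 \<le> n" unfolding n_def by simp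
  have M0: "0 \<le> M" unfolding M_def proof -
    have "0 \<le> n*t" using n0 assms by simp
    then show "0 \<le> - ((s - n*t) div q)" using nonpos[of "s - n*t"] assms by linarith
  qed
  have zero: "(s + (m-1)*q) div t = n" if "m \<in> {M+1..M'}" for m
  proof -
    have "1 - m \<le> (s - n*t) div q" using that unfolding M_def by simp
    then have a: "(1-m)*q \<le> s - n*t" using le_div_iff_int[OF q] by blast
    have "\<not> (1 - m \<le> (s - (n+1)*t) div q)" using that unfolding M'_def by simp
    then have b: "\<not> (1-m)*q \<le> s - (n+1)*t" using le_div_iff_int[OF q] by blast
    have "n \<le> (s + (m-1)*q) div t" using le_div_iff_int[OF assms(3)] a by (simp add: algebra_simps)
    moreover have "\<not> n + 1 \<le> (s + (m-1)*q) div t" using le_div_iff_int[OF assms(3)] b by (simp add: algebra_simps)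
    ultimately show ?thesis by simp
  qed
  have U: "{1..M'} = {1..M} \<union> {M+1..M'}" using MM M0 by auto
  have S1: "(\<Sum>m\<in>{1..M'}. (n - (s + (m-1)*q) div t)) = (\<Sum>m\<in>{1..M}. (n - (s + (m-1)*q) div t))"
    unfolding U by (subst sum.union_disjoint) (auto simp: zero)
  have M'0: "0 \<le> M'" using M0 MM by simp
  have S2: "(\<Sum>m\<in>{1..M'}. (n + 1 - (s + (m-1)*q) div t)) = (\<Sum>m\<in>{1..M'}. (n - (s + (m-1)*q) div t)) + M'"
  proof -
    have "(\<Sum>m\<in>{1..M'}. (n + 1 - (s + (m-1)*q) div t)) = (\<Sum>m\<in>{1..M'}. (n - (s + (m-1)*q) div t) + 1)"
      by (rule sum.cong) auto
    also have "\<dots> = (\<Sum>m\<in>{1..M'}. (n - (s + (m-1)*q) div t)) + M'"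
      using M'0 by (simp only: sum.distrib) simp
    finally show ?thesis .
  qed
  have I: "{0..n+1} = insert (n+1) {0..n}" using n0 by auto
  have L: "(\<Sum>k=0..n+1. (s - k*t) div q) = (\<Sum>k=0..n. (s - k*t) div q) - M'"
    unfolding I M'_def by (subst sum.insert) auto
  have IH: "(\<Sum>k=0..n. (s - k*t) div q) = - (\<Sum>m\<in>{1..M}. (n - (s + (m-1)*q) div t))"
    using Suc.IH unfolding n_def M_def .
  have e: "int (Suc N) = n + 1" unfolding n_def by simp
  have "(\<Sum>k=0..n+1. (s - k*t) div q) = - (\<Sum>m\<in>{1..M'}. (n + 1 - (s + (m-1)*q) div t))"
    using IH L S1 S2 by simp
  then show ?case unfolding e M'_def .
qed


lemma H_shift:
  fixes shh qhh tt k c :: int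
  assumes H: "H = {k::int. 0 \<le> k \<and> (shh + k*qhh) mod tt < qhh}"
    and "0 \<le> k" "0 \<le> k + c*tt"
  shows "(k + c*tt \<in> H) = (k \<in> H)"
proof -
  have "(shh + (k + c*tt)*qhh) mod tt = (shh + k*qhh + (c*qhh)*tt) mod tt" by (simp add: algebra_simps)
  also have "\<dots> = (shh + k*qhh) mod tt" by (rule mod_mult_self1)
  finally show ?thesis using assms by simp
qed

lemma card_J:
  fixes shh qhh tt :: int
  assumes H: "H = {k::int. 0 \<le> k \<and> (shh + k*qhh) mod tt < qhh}"
    and tt: "tt > 0" and cop: "coprime tt qhh" and q: "0 \<le> qhh" "qhh \<le> tt"
  shows "card (H \<inter> {0..tt-1}) = nat qhh"
proof -
  define A where "A = {0..tt-1}"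
  define \<phi> where "\<phi> k = (shh + k*qhh) mod tt" for k
  have inj: "inj_on \<phi> A"
  proof
    fix x y assume x: "x \<in> A" and y: "y \<in> A" and e: "\<phi> x = \<phi> y"
    have "tt dvd (shh + x*qhh) - (shh + y*qhh)" using e unfolding \<phi>_def by (simp add: mod_eq_dvd_iff)
    then have "tt dvd (x - y)*qhh" by (simp add: algebra_simps)
    then have d: "tt dvd x - y" using cop by (simp add: coprime_dvd_mult_left_iff)
    show "x = y"
    proof (rule ccontr)
      assume "x \<noteq> y"
      then have "\<bar>tt\<bar> \<le> \<bar>x - y\<bar>" using dvd_imp_le_int d by auto
      then show False using x y tt unfolding A_def by auto
    qed
  qed
  have img: "\<phi> ` A = A"
  proof (rule card_subset_eq)
    show "finite A" unfolding A_def by simp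
    show "\<phi> ` A \<subseteq> A" unfolding A_def \<phi>_def using tt by auto
    show "card (\<phi> ` A) = card A" using inj by (simp add: card_image)
  qed
  have J: "H \<inter> A = {k \<in> A. \<phi> k < qhh}" unfolding H A_def \<phi>_def by auto
  have "card {k \<in> A. \<phi> k < qhh} = card (\<phi> ` {k \<in> A. \<phi> k < qhh})"
    using inj by (simp add: card_image inj_on_subset)
  also have "\<phi> ` {k \<in> A. \<phi> k < qhh} = {y \<in> \<phi> ` A. y < qhh}" by auto
  also have "\<dots> = {y \<in> A. y < qhh}" using img by simp
  also have "\<dots> = {0..qhh-1}" unfolding A_def using q by auto
  finally show ?thesis using J unfolding A_def by simp
qed

lemma sum_blocks:
  fixes shh qhh tt :: int
  assumes H: "H = {k::int. 0 \<le> k \<and> (shh + k*qhh) mod tt < qhh}"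
    and tt: "tt > 0" and cJ: "card (H \<inter> {0..tt-1}) = nat qhh" and q: "0 \<le> qhh"
  shows "\<Sum>(H \<inter> {0..int u*tt - 1}) = int u * \<Sum>(H \<inter> {0..tt-1}) + qhh*tt*(((int u - 1)*int u) div 2)"
proof (induction u)
  case 0
  then show ?case by simp
next
  case (Suc u)
  define J where "J = H \<inter> {0..tt-1}"
  have U: "H \<inter> {0..int (Suc u)*tt - 1} = (H \<inter> {0..int u*tt - 1}) \<union> (H \<inter> {int u*tt..int u*tt + tt - 1})"
    using tt H by (auto simp: algebra_simps)
  have Im: "H \<inter> {int u*tt..int u*tt + tt - 1} = (\<lambda>j. j + int u*tt) ` J"
  proof
    show "H \<inter> {int u*tt..int u*tt + tt - 1} \<subseteq> (\<lambda>j. j + int u*tt) ` J"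
    proof
      fix k assume k: "k \<in> H \<inter> {int u*tt..int u*tt + tt - 1}"
      have "k - int u * tt \<in> H" using H_shift[OF H, of "k - int u*tt" "int u"] k H by auto
      then have "k - int u*tt \<in> J" using k unfolding J_def by auto
      then show "k \<in> (\<lambda>j. j + int u*tt) ` J" by (rule rev_image_eqI) simp
    qed
    show "(\<lambda>j. j + int u*tt) ` J \<subseteq> H \<inter> {int u*tt..int u*tt + tt - 1}"
    proof
      fix k assume "k \<in> (\<lambda>j. j + int u*tt) ` J"
      then obtain j where j: "j \<in> J" "k = j + int u*tt" by auto
      have "j + int u*tt \<in> H" using H_shift[OF H, of j "int u"] j tt unfolding J_def by auto
      then show "k \<in> H \<inter> {int u*tt..int u*tt + tt - 1}" using j unfolding J_def by auto
    qed
  qed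
  have fJ: "finite J" unfolding J_def by simp
  have S2: "\<Sum>(H \<inter> {int u*tt..int u*tt + tt - 1}) = \<Sum>J + qhh * (int u * tt)"
  proof -
    have "\<Sum>(H \<inter> {int u*tt..int u*tt + tt - 1}) = (\<Sum>j\<in>J. j + int u*tt)"
      unfolding Im by (subst sum.reindex) (auto simp: inj_on_def)
    also have "\<dots> = \<Sum>J + of_nat (card J) * (int u*tt)" by (simp add: sum.distrib)
    finally show ?thesis using cJ q unfolding J_def by simp
  qed
  have S: "\<Sum>(H \<inter> {0..int (Suc u)*tt - 1}) = \<Sum>(H \<inter> {0..int u*tt - 1}) + \<Sum>(H \<inter> {int u*tt..int u*tt + tt - 1})"
    unfolding U by (rule sum.union_disjoint) auto
  have T: "((int (Suc u) - 1) * int (Suc u)) div 2 = ((int u - 1) * int u) div 2 + int u"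
    using tri_step[of u] by (simp add: ac_simps)
  show ?case unfolding S S2 T Suc.IH J_def[symmetric] by (simp add: algebra_simps)
qed

theorem theorem13:
  fixes s t q N :: int
  assumes "0 \<le> s" "s < q" "1 \<le> t" "t < q" "0 \<le> N"
    and "\<not> t dvd q" and "gcd t q > 1"
  defines "g \<equiv> gcd t q"
  defines "tt \<equiv> t div g"
  defines "qt \<equiv> q div g"
  defines "sbar \<equiv> s div g"
  defines "shh \<equiv> sbar mod tt"
  defines "qhh \<equiv> qt mod tt"
  defines "M \<equiv> - ((s - N*t) div q)"
  defines "S \<equiv> - (q div t) * (((M - 1) * M) div 2) - M * (N - (s + (M - 1)*q) div t)"
  defines "H \<equiv> {k::int. 0 \<le> k \<and> (shh + k*qhh) mod tt < qhh}"
  defines "J \<equiv> H \<inter> {0..tt - 1}"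
  defines "u \<equiv> (M - 1) div tt"
  shows "(Min J \<ge> M \<longrightarrow> Sminus s t q N = S)
    \<and> (Min J < M \<and> M \<le> Max J \<longrightarrow> Sminus s t q N = S - \<Sum>(H \<inter> {0..M-1}))
    \<and> (Max J < M \<and> Min J + tt \<ge> M \<longrightarrow> Sminus s t q N = S - \<Sum>J)
    \<and> (Max J < M \<and> Min J + tt < M \<longrightarrow>
         Sminus s t q N = S - u * \<Sum>J - qhh * tt * (((u - 1) * u) div 2)
                          - \<Sum>(H \<inter> {u*tt..M-1}))"
proof -
  have Heq: "H = {k::int. 0 \<le> k \<and> (shh + k*qhh) mod tt < qhh}" unfolding H_def ..
  have g1: "g > 1" using assms(7) unfolding g_def .
  have t0: "t > 0" "q > 0" using assms by auto
  have tg: "t = g*tt" unfolding tt_def g_def by simp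
  have qg: "q = g*qt" unfolding qt_def g_def by simp
  have tt0: "tt > 0" using tg t0 g1 by (simp add: zero_less_mult_iff)
  have qt0: "qt > 0" using qg t0 g1 by (simp add: zero_less_mult_iff)
  have qhh0: "0 \<le> qhh" "qhh < tt" unfolding qhh_def using tt0 by simp_all
  have qhh1: "qhh \<noteq> 0"
  proof
    assume "qhh = 0"
    then have "tt dvd qt" unfolding qhh_def by (simp add: mod_eq_0_iff_dvd)
    then have "t dvd q" unfolding tg qg by simp
    then show False using assms(6) by simp
  qed
  have copq: "coprime tt qt" unfolding tt_def qt_def g_def using div_gcd_coprime[of t q] t0 by simp
  have cop: "coprime tt qhh" unfolding qhh_def using copq tt0 by simp
  have cJ: "card J = nat qhh" unfolding J_def by (rule card_J[OF Heq tt0 cop]) (use qhh0 in auto)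
  define sg where "sg = s mod g"
  have sdec: "s = g*sbar + sg" unfolding sg_def sbar_def by simp
  have sg0: "0 \<le> sg" "sg < g" unfolding sg_def using g1 by simp_all
  have qdt: "q div t = qt div tt" unfolding tg qg using g1 by simp
  define a where "a m = (s + (m-1)*q) div t" for m
  have step: "a (m+1) = a m + q div t + (if m \<in> H then 1 else 0)" if m1: "m \<ge> 1" for m
  proof -
    define X where "X = sbar + (m-1)*qt"
    have e1: "s + (m-1)*q = g*X + sg" unfolding X_def sdec qg by (simp add: algebra_simps)
    have e2: "s + (m+1-1)*q = g*(X+qt) + sg" unfolding X_def sdec qg by (simp add: algebra_simps)
    have a1: "a m = X div tt" unfolding a_def e1 tg using red_div g1 tt0 sg0 by simp
    have a2: "a (m+1) = (X+qt) div tt" unfolding a_def e2 tg using red_div g1 tt0 sg0 by simp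
    have "(X + qt) mod tt = (sbar + m*qt) mod tt" unfolding X_def by (simp add: algebra_simps)
    also have "\<dots> = (sbar mod tt + (m*qt) mod tt) mod tt" by (rule mod_add_eq[symmetric])
    also have "\<dots> = (sbar mod tt + (m*(qt mod tt)) mod tt) mod tt" by (simp only: mod_mult_right_eq)
    also have "\<dots> = (shh + m*qhh) mod tt" unfolding shh_def qhh_def by (rule mod_add_right_eq)
    finally have mm: "(X + qt) mod tt = (shh + m*qhh) mod tt" .
    have "m \<in> H \<longleftrightarrow> (X+qt) mod tt < qt mod tt" unfolding H_def mm qhh_def using m1 by simp
    then show ?thesis unfolding a1 a2 qdt using add_div_carry[OF tt0, of X qt] by simp
  qed
  have M0: "0 \<le> M"
  proof -
    have "0 \<le> N*t" using assms by simp
    then have "s - N*t < q" using assms by linarith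
    then have "(s - N*t) div q \<le> 0" using le_div_iff_int[OF t0(2), of 1 "s - N*t"] by simp
    then show ?thesis unfolding M_def by simp
  qed
  have c1: "Sminus s t q N = - (\<Sum>m\<in>{1..M}. (N - a m))"
    using count_ident[OF assms(1,2) t0(1), of "nat N"] assms(5)
    unfolding Sminus_def M_def a_def by simp
  have c2: "(\<Sum>m\<in>{1..M}. (N - a m)) = M*N - (\<Sum>m\<in>{1..M}. a m)"
    using M0 by (simp add: sum_subtractf)
  have c3: "(\<Sum>m\<in>{1..M}. a m) - M * a M = - (q div t) * (((M - 1) * M) div 2) - \<Sum>(H \<inter> {0..M - 1})"
    using sum_ident[of a "q div t" H "nat M"] step M0 by simp
  have core: "Sminus s t q N = S - \<Sum>(H \<inter> {0..M-1})"
    using c1 c2 c3 unfolding S_def a_def[symmetric] by (simp add: algebra_simps)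
  have fJ: "finite J" unfolding J_def by simp
  have neJ: "J \<noteq> {}" using cJ qhh0 qhh1 by auto
  have minJ: "Min J \<in> J" and maxJ: "Max J \<in> J" using fJ neJ by simp_all
  have Jb: "0 \<le> j" "j \<le> tt - 1" "j \<in> H" if "j \<in> J" for j using that unfolding J_def H_def by auto
  have minle: "Min J \<le> j" if "j \<in> J" for j using fJ that by simp
  have maxge: "j \<le> Max J" if "j \<in> J" for j using fJ that by simp
  have Hnn: "0 \<le> k" if "k \<in> H" for k using that unfolding H_def by simp
  show ?thesis
  proof (intro conjI impI)
    assume h: "M \<le> Min J"
    have "H \<inter> {0..M-1} = {}"
    proof (rule ccontr)
      assume "H \<inter> {0..M-1} \<noteq> {}"
      then obtain k where k: "k \<in> H" "0 \<le> k" "k \<le> M - 1" by auto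
      have "Min J \<le> tt - 1" using Jb(2)[OF minJ] .
      then have "k \<in> J" using k h unfolding J_def by auto
      then show False using minle k h by fastforce
    qed
    then show "Sminus s t q N = S" using core by simp
  next
    assume "Min J < M \<and> M \<le> Max J"
    show "Sminus s t q N = S - \<Sum>(H \<inter> {0..M-1})" by (rule core)
  next
    assume h: "Max J < M \<and> M \<le> Min J + tt"
    have "H \<inter> {0..M-1} = J"
    proof
      show "J \<subseteq> H \<inter> {0..M-1}" using h Jb maxge by fastforce
      show "H \<inter> {0..M-1} \<subseteq> J"
      proof
        fix k assume k: "k \<in> H \<inter> {0..M-1}"
        show "k \<in> J"
        proof (cases "k \<le> tt - 1")
          case True then show ?thesis using k unfolding J_def by auto
        next
          case False
          have "k - tt + 1*tt \<in> H" using k by simp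
          then have "k - tt \<in> H" using H_shift[OF Heq, of "k - tt" 1] False k by simp
          then have "k - tt \<in> J" using k h Jb(2)[OF minJ] False unfolding J_def by auto
          then show ?thesis using minle[of "k - tt"] k h by simp
        qed
      qed
    qed
    then show "Sminus s t q N = S - \<Sum>J" using core by simp
  next
    assume h: "Max J < M \<and> Min J + tt < M"
    have u0: "0 \<le> u" unfolding u_def using h Jb(1)[OF maxJ] tt0 by (simp add: pos_imp_zdiv_nonneg_iff)
    have ule: "u*tt \<le> M - 1"
    proof -
      have "(M-1) div tt * tt + (M-1) mod tt = M-1" by simp
      moreover have "0 \<le> (M-1) mod tt" using tt0 by simp
      ultimately show ?thesis unfolding u_def by linarith
    qed
    have U: "H \<inter> {0..M-1} = (H \<inter> {0..u*tt - 1}) \<union> (H \<inter> {u*tt..M-1})"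
      using ule u0 tt0 Hnn by (auto simp: mult_nonneg_nonneg)
    have sp: "\<Sum>(H \<inter> {0..M-1}) = \<Sum>(H \<inter> {0..u*tt - 1}) + \<Sum>(H \<inter> {u*tt..M-1})"
      unfolding U by (rule sum.union_disjoint) auto
    have bl: "\<Sum>(H \<inter> {0..int (nat u)*tt - 1}) = int (nat u) * \<Sum>J + qhh*tt*(((int (nat u) - 1)*int (nat u)) div 2)"
      using sum_blocks[OF Heq tt0 _ qhh0(1), of "nat u"] cJ unfolding J_def by simp
    show "Sminus s t q N = S - u * \<Sum>J - qhh * tt * (((u - 1) * u) div 2) - \<Sum>(H \<inter> {u*tt..M-1})"
      using core sp bl u0 by simp
  qed
qed

end
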